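(* For every $k\ge 0$, as formal power series in $z$, $$\sum_{n\ge 0} e(n,n-k)z^n=\frac{z^k}{(1-z)^{2\lfloor\frac{k+1}{2}\rfloor+1}(1+z^2)^{\lfloor\frac{k}{2}\rfloor+1}}\,L_{k+2}(-z).$$
   Context: $e(n,j)$ is the number of $j$-element subsets of $\{1,\dots,n\}$ with even sum (the empty set counts as even; $e(n,j)=0$ for $j<0$). Losanitsch's triangle $(L(n,k))$ is defined by $L(0,k)=[k=0]$, $L(1,k)=[k\le 1]$ for $k\ge0$, $L(n,k)=0$ for $k<0$, and for $n\ge 2$: $L(n,k)=L(n-2,k)+\binom{n-2}{k-1}+L(n-2,k-2)$ (with $\binom{m}{j}=0$ for $j<0$ or $j>m$). The Losanitsch polynomials are $L_n(x)=\sum_{k=0}^n L(n,k)x^k$. *)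

theory Defs
  imports "HOL-Computational_Algebra.Computational_Algebra"
begin

definition e_even :: "nat \<Rightarrow> int \<Rightarrow> nat" where
  "e_even n j = (if j < 0 then 0
     else card {S. S \<subseteq> {1..n} \<and> card S = nat j \<and> even (\<Sum>S)})"

definition binom_int :: "nat \<Rightarrow> int \<Rightarrow> nat" where
  "binom_int m j = (if j < 0 then 0 else m choose (nat j))"

fun losanitsch :: "nat \<Rightarrow> int \<Rightarrow> nat" where
  "losanitsch 0 k = (if k = 0 then 1 else 0)"
| "losanitsch (Suc 0) k = (if 0 \<le> k \<and> k \<le> 1 then 1 else 0)"
| "losanitsch (Suc (Suc n)) k =
     (if k < 0 then 0
      else losanitsch n k + binom_int n (k - 1) + losanitsch n (k - 2))"

definition losanitsch_poly :: "nat \<Rightarrow> rat poly" where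
  "losanitsch_poly n = (\<Sum>k\<le>n. monom (of_nat (losanitsch n (int k))) k)"

end

theory Submission
  imports Defs
begin



definition ev :: "nat \<Rightarrow> nat \<Rightarrow> nat" where
  "ev n j = card {S. S \<subseteq> {1..n} \<and> card S = j \<and> even (\<Sum>S)}"
definition od :: "nat \<Rightarrow> nat \<Rightarrow> nat" where
  "od n j = card {S. S \<subseteq> {1..n} \<and> card S = j \<and> odd (\<Sum>S)}"

lemma split_card:
  fixes Q :: "nat \<Rightarrow> bool"
  shows "card {S. S \<subseteq> {1..Suc n} \<and> card S = Suc j \<and> Q (\<Sum>S)} =
    card {S. S \<subseteq> {1..n} \<and> card S = Suc j \<and> Q (\<Sum>S)} +
    card {S. S \<subseteq> {1..n} \<and> card S = j \<and> Q (\<Sum>S + Suc n)}"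
proof -
  let ?L = "{S. S \<subseteq> {1..Suc n} \<and> card S = Suc j \<and> Q (\<Sum>S)}"
  let ?A = "{S. S \<subseteq> {1..n} \<and> card S = Suc j \<and> Q (\<Sum>S)}"
  let ?B = "{S. S \<subseteq> {1..n} \<and> card S = j \<and> Q (\<Sum>S + Suc n)}"
  have fin: "finite {S. S \<subseteq> {1..m}}" for m :: nat by auto
  have fA: "finite ?A" by (rule finite_subset[OF _ fin[of n]]) auto
  have fB: "finite ?B" by (rule finite_subset[OF _ fin[of n]]) auto
  have eq: "?L = ?A \<union> insert (Suc n) ` ?B"
  proof (rule set_eqI, rule iffI)
    fix S assume S: "S \<in> ?L"
    show "S \<in> ?A \<union> insert (Suc n) ` ?B"
    proof (cases "Suc n \<in> S")
      case False
      with S have "S \<subseteq> {1..n}" by (auto simp: le_Suc_eq)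
      with S show ?thesis by auto
    next
      case True
      let ?T = "S - {Suc n}"
      have fS: "finite S" using S finite_subset[of S "{1..Suc n}"] by auto
      have T1: "?T \<subseteq> {1..n}" using S by (auto simp: le_Suc_eq)
      have T2: "card ?T = j" using S True fS by auto
      have T3: "\<Sum>S = \<Sum>?T + Suc n" using True fS
        by (metis add.commute sum.remove)
      have "S = insert (Suc n) ?T" using True by auto
      moreover have "?T \<in> ?B" using T1 T2 T3 S by auto
      ultimately show ?thesis by blast
    qed
  next
    fix S assume "S \<in> ?A \<union> insert (Suc n) ` ?B"
    then show "S \<in> ?L"
    proof
      assume "S \<in> ?A" then show ?thesis by auto
    next
      assume "S \<in> insert (Suc n) ` ?B"
      then obtain T where T: "T \<in> ?B" and ST: "S = insert (Suc n) T" by blast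
      have fT: "finite T" using T finite_subset[of T "{1..n}"] by auto
      have nT: "Suc n \<notin> T" using T by auto
      have "card S = Suc j" using ST fT nT T by auto
      moreover have "\<Sum>S = \<Sum>T + Suc n" using ST fT nT by simp
      moreover have "S \<subseteq> {1..Suc n}" using ST T by auto
      ultimately show ?thesis using T by auto
    qed
  qed
  have disj: "?A \<inter> insert (Suc n) ` ?B = {}" by auto
  have inj: "inj_on (insert (Suc n)) ?B"
  proof (rule inj_onI)
    fix x y assume x: "x \<in> ?B" and y: "y \<in> ?B" and xy: "insert (Suc n) x = insert (Suc n) y"
    have "Suc n \<notin> x" "Suc n \<notin> y" using x y by auto
    then have "x = insert (Suc n) x - {Suc n}" "y = insert (Suc n) y - {Suc n}" by auto
    with xy show "x = y" by simp
  qed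
  have "card ?L = card ?A + card (insert (Suc n) ` ?B)"
    unfolding eq by (rule card_Un_disjoint[OF fA finite_imageI[OF fB] disj])
  also have "card (insert (Suc n) ` ?B) = card ?B" by (rule card_image[OF inj])
  finally show ?thesis .
qed

lemma ev_Suc: "ev (Suc n) (Suc j) = ev n (Suc j) + (if even (Suc n) then ev n j else od n j)"
  unfolding ev_def od_def split_card by auto

lemma od_Suc: "od (Suc n) (Suc j) = od n (Suc j) + (if even (Suc n) then od n j else ev n j)"
  unfolding ev_def od_def using split_card[of n j "\<lambda>x. odd x"] by auto

lemma ev_0: "ev n 0 = 1"
proof -
  have "{S. S \<subseteq> {1..n} \<and> card S = 0 \<and> even (\<Sum>S)} = {{}}"
    using finite_subset[of _ "{1..n}"] by (auto simp: card_eq_0_iff)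
  then show ?thesis by (simp add: ev_def)
qed

lemma od_0: "od n 0 = 0"
proof -
  have "{S. S \<subseteq> {1..n} \<and> card S = 0 \<and> odd (\<Sum>S)} = {}"
    using finite_subset[of _ "{1..n}"] by (auto simp: card_eq_0_iff)
  then show ?thesis by (simp add: od_def)
qed

lemma ev_od: "ev n j + od n j = n choose j"
proof -
  have fin: "finite {S. S \<subseteq> {1..n}}" by auto
  have "ev n j + od n j = card ({S. S \<subseteq> {1..n} \<and> card S = j \<and> even (\<Sum>S)} \<union>
     {S. S \<subseteq> {1..n} \<and> card S = j \<and> odd (\<Sum>S)})"
    unfolding ev_def od_def
    by (rule card_Un_disjoint[symmetric]) (auto intro: finite_subset[OF _ fin])
  also have "({S. S \<subseteq> {1..n} \<and> card S = j \<and> even (\<Sum>S)} \<union>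
     {S. S \<subseteq> {1..n} \<and> card S = j \<and> odd (\<Sum>S)}) = {S. S \<subseteq> {1..n} \<and> card S = j}" by auto
  also have "card \<dots> = n choose j" using n_subsets[of "{1..n}" j] by simp
  finally show ?thesis .
qed

lemma ev_big: "n < j \<Longrightarrow> ev n j = 0"
proof -
  assume "n < j"
  have "{S. S \<subseteq> {1..n} \<and> card S = j \<and> even (\<Sum>S)} = {}"
  proof (rule ccontr)
    assume "\<not> ?thesis"
    then obtain S where "S \<subseteq> {1..n}" "card S = j" by auto
    then have "j \<le> n" using card_mono[of "{1..n}" S] by simp
    with \<open>n < j\<close> show False by simp
  qed
  then show ?thesis by (simp add: ev_def)
qed

lemma two_step: "ev (n+2) (j+2) + ev n j = ev n (j+2) + (Suc n choose Suc j)"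
proof (cases "even n")
  case True
  have "ev (n+2) (j+2) = ev (Suc n) (Suc (Suc j)) + ev (Suc n) (Suc j)"
    using ev_Suc[of "Suc n" "Suc j"] True by simp
  also have "\<dots> = ev n (j+2) + od n (Suc j) + (ev n (Suc j) + od n j)"
    using ev_Suc[of n "Suc j"] ev_Suc[of n j] True by simp
  finally show ?thesis using ev_od[of n j] ev_od[of n "Suc j"] by simp
next
  case False
  have "ev (n+2) (j+2) = ev (Suc n) (Suc (Suc j)) + od (Suc n) (Suc j)"
    using ev_Suc[of "Suc n" "Suc j"] False by simp
  also have "\<dots> = ev n (j+2) + ev n (Suc j) + (od n (Suc j) + od n j)"
    using ev_Suc[of n "Suc j"] od_Suc[of n j] False by simp
  finally show ?thesis using ev_od[of n j] ev_od[of n "Suc j"] by simp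
qed

lemma two_step1: "ev (n+2) 1 = ev n 1 + 1"
proof (cases "even n")
  case True
  then show ?thesis using ev_Suc[of "Suc n" 0] ev_Suc[of n 0] ev_0 od_0 by simp
next
  case False
  then show ?thesis using ev_Suc[of "Suc n" 0] ev_Suc[of n 0] od_Suc[of n 0] ev_0 od_0 by simp
qed

lemma e_even_ev: "e_even n j = (if j < 0 then 0 else ev n (nat j))"
  unfolding e_even_def ev_def by simp

lemma two_step_int:
  "e_even (n+2) (j+2) + e_even n j = e_even n (j+2) + binom_int (Suc n) (j+1)"
proof -
  consider "j \<ge> 0" | "j = -1" | "j = -2" | "j < -2" by linarith
  then show ?thesis
  proof cases
    case 1
    then have a: "nat (j+2) = nat j + 2" "nat (j+1) = Suc (nat j)" by auto
    show ?thesis using 1 two_step[of n "nat j"] unfolding e_even_ev binom_int_def a by simp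
  next
    case 2 then show ?thesis using two_step1[of n] ev_0[of n] unfolding e_even_ev binom_int_def by simp
  next
    case 3 then show ?thesis using ev_0 unfolding e_even_ev binom_int_def by simp
  next
    case 4 then show ?thesis unfolding e_even_ev binom_int_def by simp
  qed
qed




lemma los_zero: "k < 0 \<or> int n < k \<Longrightarrow> losanitsch n k = 0"
  by (induction n k rule: losanitsch.induct) (auto simp: binom_int_def)

lemma coeff_lp: "coeff (losanitsch_poly n) i = of_nat (losanitsch n (int i))"
proof -
  have "coeff (losanitsch_poly n) i = (\<Sum>k\<le>n. if k = i then of_nat (losanitsch n (int k)) else 0)"
    unfolding losanitsch_poly_def coeff_sum coeff_monom by (rule sum.cong) auto
  also have "\<dots> = (if i \<le> n then of_nat (losanitsch n (int i)) else 0)"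
    by (simp add: sum.delta)
  also have "\<dots> = of_nat (losanitsch n (int i))" using los_zero[of "int i" n] by auto
  finally show ?thesis .
qed

lemma coeff_11: "coeff ([:1,1:]^n :: rat poly) i = of_nat (n choose i)"
proof (cases "i \<le> n")
  case True then show ?thesis using coeff_linear_poly_power[of i n 1 1] by simp
next
  case False
  have "degree ([:1,1:]^n :: rat poly) \<le> n"
    by (rule order.trans[OF degree_power_le]) simp
  then show ?thesis using False by (simp add: coeff_eq_0)
qed

lemma lp_rec: "losanitsch_poly (Suc (Suc n)) = losanitsch_poly n + pCons 0 (pCons 0 (losanitsch_poly n))
   + pCons 0 ([:1,1:]^n)"
proof (rule poly_eqI)
  fix i
  show "coeff (losanitsch_poly (Suc (Suc n))) i = coeff (losanitsch_poly n + pCons 0 (pCons 0 (losanitsch_poly n))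
   + pCons 0 ([:1,1:]^n)) i"
  proof (cases i)
    case 0 then show ?thesis by (simp add: coeff_lp binom_int_def los_zero)
  next
    case (Suc i1)
    show ?thesis
    proof (cases i1)
      case 0 then show ?thesis using Suc by (simp add: coeff_lp binom_int_def los_zero coeff_11)
    next
      case (Suc i2)
      have a: "int (Suc (Suc i2)) - 1 = int (Suc i2)" "int (Suc (Suc i2)) - 2 = int i2" by auto
      show ?thesis using \<open>i = Suc i1\<close> Suc
        by (simp only: coeff_lp) (simp add: binom_int_def coeff_11 a coeff_lp del: of_nat_Suc)
    qed
  qed
qed




definition Qf :: "nat \<Rightarrow> rat fps" where
  "Qf n = fps_of_poly (pcompose (losanitsch_poly n) [:0, -1:])"

lemma pcompose_one: "pcompose 1 q = 1"
  by (metis pcompose_const one_pCons)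

lemma pcompose_power: "pcompose (p ^ n) q = (pcompose p q) ^ n"
  by (induction n) (simp_all add: pcompose_mult pcompose_one)

lemma fps_m: "fps_of_poly [:0, -1::rat:] = - fps_X"
  by (simp add: fps_of_poly_pCons fps_of_poly_const)

lemma fps_1m: "fps_of_poly [:1, -1::rat:] = 1 - fps_X"
  by (simp add: fps_of_poly_pCons fps_of_poly_const)

lemma Qf_rec: "Qf (Suc (Suc n)) = (1 + fps_X^2) * Qf n - fps_X * (1 - fps_X)^n"
proof -
  have c: "pcompose [:1,1:] [:0,-1::rat:] = [:1,-1:]" by (simp add: pcompose_pCons)
  show ?thesis
    unfolding Qf_def lp_rec pcompose_add pcompose_pCons pcompose_power c
    by (simp add: fps_of_poly_add fps_of_poly_mult fps_of_poly_power fps_m fps_1m algebra_simps power2_eq_square)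
qed

lemma Qf_0: "Qf 0 = 1"
  by (simp add: Qf_def losanitsch_poly_def pcompose_one)

lemma Qf_1: "Qf (Suc 0) = 1 - fps_X"
proof -
  have "losanitsch_poly 1 = [:1, 1:]"
    by (simp add: losanitsch_poly_def monom_altdef one_pCons)
  then show ?thesis by (simp add: Qf_def pcompose_pCons fps_1m)
qed

lemma Qf_closed: "2 * Qf n = (1 - fps_X)^n + (1 - fps_X)^(n mod 2) * (1 + fps_X^2)^(n div 2)"
proof (induction n rule: nat_less_induct)
  case (1 n)
  show ?case
  proof (cases n)
    case 0 then show ?thesis by (simp add: Qf_0)
  next
    case (Suc m)
    show ?thesis
    proof (cases m)
      case 0 then show ?thesis using Suc by (simp add: Qf_1 algebra_simps)
    next
      case (Suc p)
      have IH: "2 * Qf p = (1 - fps_X)^p + (1 - fps_X)^(p mod 2) * (1 + fps_X^2)^(p div 2)"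
        using 1 \<open>n = Suc m\<close> Suc by auto
      have n: "n = Suc (Suc p)" using \<open>n = Suc m\<close> Suc by simp
      have m2: "Suc (Suc p) mod 2 = p mod 2" "Suc (Suc p) div 2 = Suc (p div 2)" by auto
      have "2 * Qf n = (1 + fps_X^2) * (2 * Qf p) - 2 * fps_X * (1 - fps_X)^p"
        unfolding n Qf_rec by (simp add: algebra_simps)
      also have "\<dots> = (1 - fps_X)^(Suc (Suc p)) + (1 - fps_X)^(p mod 2) * (1 + fps_X^2)^(Suc (p div 2))"
        unfolding IH by (simp add: algebra_simps power2_eq_square)
      finally show ?thesis unfolding n m2 .
    qed
  qed
qed




definition Af :: "nat \<Rightarrow> rat fps" where
  "Af k = Abs_fps (\<lambda>n. of_nat (e_even n (int n - int k)))"
definition Df :: "nat \<Rightarrow> rat fps" where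
  "Df k = Abs_fps (\<lambda>n. of_nat (e_even n (int n - int k + 2)))"
definition Bf :: "nat \<Rightarrow> rat fps" where
  "Bf k = Abs_fps (\<lambda>n. of_nat (n choose k))"

lemma coef_rec:
  "e_even (Suc (Suc n)) (int (Suc (Suc n)) - int k) + e_even n (int n - int k)
     = e_even n (int n - int k + 2) + (Suc n choose k)"
proof -
  have t: "e_even (n+2) ((int n - int k)+2) + e_even n (int n - int k)
     = e_even n ((int n - int k)+2) + binom_int (Suc n) ((int n - int k)+1)"
    by (rule two_step_int)
  have b: "binom_int (Suc n) ((int n - int k)+1) = Suc n choose k"
  proof (cases "k \<le> Suc n")
    case True
    then have "nat (int n - int k + 1) = Suc n - k" by auto
    then show ?thesis using True unfolding binom_int_def
      by (simp add: binomial_symmetric[OF True, symmetric])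
  next
    case False then show ?thesis unfolding binom_int_def by auto
  qed
  have e: "int n - int k + 2 = int (Suc (Suc n)) - int k" by simp
  show ?thesis using t unfolding b e by simp
qed

lemma gen_rec0:
  "Af k + fps_X^2 * Af k = fps_X^2 * Df k + fps_X * Bf k
     + fps_const (of_nat (e_even 0 (- int k)))
     + fps_X * fps_const (of_nat (e_even 1 (1 - int k)) - of_nat (0 choose k))"
proof (rule fps_ext)
  fix n
  have l: "(Af k + fps_X^2 * Af k) $ n = Af k $ n + (fps_X^2 * Af k) $ n"
    by simp
  show "(Af k + fps_X^2 * Af k) $ n = (fps_X^2 * Df k + fps_X * Bf k
     + fps_const (of_nat (e_even 0 (- int k)))
     + fps_X * fps_const (of_nat (e_even 1 (1 - int k)) - of_nat (0 choose k))) $ n"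
  proof (cases n)
    case 0 then show ?thesis by (simp add: l fps_X_power_mult_nth Af_def)
  next
    case (Suc m)
    show ?thesis
    proof (cases m)
      case 0 then show ?thesis using Suc by (simp add: l fps_X_power_mult_nth Af_def Bf_def)
    next
      case (Suc p)
      have "rat_of_nat (e_even (Suc (Suc p)) (int (Suc (Suc p)) - int k) + e_even p (int p - int k))
         = rat_of_nat (e_even p (int p - int k + 2) + (Suc p choose k))"
        using coef_rec[of p k] by simp
      then show ?thesis using Suc \<open>n = Suc m\<close>
        by (simp add: l fps_X_power_mult_nth Af_def Bf_def Df_def del: of_nat_Suc)
    qed
  qed
qed

lemma gen_rec:
  "(1 + fps_X^2) * Af k = fps_X^2 * Df k + fps_X * Bf k
     + fps_const (of_nat (e_even 0 (- int k)))
     + fps_X * fps_const (of_nat (e_even 1 (1 - int k)) - of_nat (0 choose k))"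
  using gen_rec0[of k] by (simp add: distrib_right)

lemma e_big: "int n < j \<Longrightarrow> e_even n j = 0"
  unfolding e_even_ev using ev_big[of n "nat j"] by auto

lemma rec_step: "(1 + fps_X^2) * Af (Suc (Suc k)) = fps_X^2 * Af k + fps_X * Bf (Suc (Suc k))"
proof -
  have "Df (Suc (Suc k)) = Af k" unfolding Df_def Af_def by simp
  moreover have "e_even 0 (- int (Suc (Suc k))) = 0" by (simp add: e_even_def)
  moreover have "e_even 1 (1 - int (Suc (Suc k))) = 0" by (simp add: e_even_def)
  ultimately show ?thesis using gen_rec[of "Suc (Suc k)"] by simp
qed

lemma rec_0: "(1 + fps_X^2) * Af 0 = fps_X * Bf 0 + 1 - fps_X"
proof -
  have "Df 0 = 0" unfolding Df_def by (rule fps_ext) (simp add: e_big)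
  moreover have "e_even 0 0 = 1" by (simp add: e_even_ev ev_0)
  moreover have "e_even 1 1 = 0" using ev_Suc[of 0 0] ev_big[of 0 1] od_0[of 0]
    by (simp add: e_even_ev)
  ultimately show ?thesis using gen_rec[of 0] by simp
qed

lemma rec_1: "(1 + fps_X^2) * Af 1 = fps_X * Bf 1 + fps_X"
proof -
  have "Df 1 = 0" unfolding Df_def by (rule fps_ext) (simp add: e_big)
  moreover have "e_even 0 (-1) = 0" by (simp add: e_even_ev)
  moreover have "e_even 1 0 = 1" by (simp add: e_even_ev ev_0)
  ultimately show ?thesis using gen_rec[of 1] by simp
qed

lemma Bf_step: "Bf (Suc k) * (1 - fps_X) = fps_X * Bf k"
proof (rule fps_ext)
  fix n
  have "(Bf (Suc k) * (1 - fps_X)) $ n = Bf (Suc k) $ n - (fps_X * Bf (Suc k)) $ n"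
    by (simp add: algebra_simps)
  then show "(Bf (Suc k) * (1 - fps_X)) $ n = (fps_X * Bf k) $ n"
    by (cases n) (simp_all add: Bf_def)
qed

lemma Bf_0: "Bf 0 * (1 - fps_X) = 1"
proof (rule fps_ext)
  fix n
  have "(Bf 0 * (1 - fps_X)) $ n = Bf 0 $ n - (fps_X * Bf 0) $ n"
    by (simp add: algebra_simps)
  then show "(Bf 0 * (1 - fps_X)) $ n = 1 $ n"
    by (cases n) (simp_all add: Bf_def)
qed

lemma Bf_closed: "Bf k * (1 - fps_X)^(Suc k) = fps_X^k"
proof (induction k)
  case 0 then show ?case using Bf_0 by simp
next
  case (Suc k)
  have "Bf (Suc k) * (1 - fps_X)^(Suc (Suc k)) = (Bf (Suc k) * (1 - fps_X)) * (1 - fps_X)^(Suc k)"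
    by (simp add: ac_simps)
  also have "\<dots> = fps_X * (Bf k * (1 - fps_X)^(Suc k))" unfolding Bf_step by (simp add: ac_simps)
  also have "\<dots> = fps_X * fps_X^k" using Suc.IH by simp
  finally show ?case by simp
qed

lemma alg:
  fixes X A A' B Q Q' c d e p w :: "'a::comm_ring_1"
  assumes rec: "(1+X*X)*A' = X*X*A + X*B"
  and ih: "A*c*d = p*Q"
  and hb: "B*(w*(1-X)) = p*X*X"
  and ha: "c*(1-X)*(1-X) = w*(1-X)*e"
  and hq: "Q + Q = w + e*d"
  and hq': "Q' = (1+X*X)*Q - X*w"
  shows "A'*(c*(1-X)*(1-X))*(d*(1+X*X)) = p*X*X*Q'"
proof -
  have "A'*(c*(1-X)*(1-X))*(d*(1+X*X)) = (c*(1-X)*(1-X))*d*((1+X*X)*A')" by (simp add: ac_simps)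
  also have "\<dots> = (1-X)*(1-X)*X*X*(A*c*d) + X*d*(B*(c*(1-X)*(1-X)))" unfolding rec by (simp add: algebra_simps)
  also have "\<dots> = (1-X)*(1-X)*X*X*(p*Q) + X*d*e*(B*(w*(1-X)))" unfolding ih ha by (simp add: ac_simps)
  also have "\<dots> = (1-X)*(1-X)*X*X*(p*Q) + X*d*e*(p*X*X)" unfolding hb ..
  also have "\<dots> = p*X*X*((1+X*X)*Q - X*w) + p*X*X*X*(w + e*d - (Q+Q))" by (simp add: algebra_simps)
  also have "\<dots> = p*X*X*Q'" unfolding hq hq' by simp
  finally show ?thesis .
qed

lemma c1: fixes x :: "'a::comm_ring_1"
  shows "x*(1-x)*x + x*(1-x)*(1-x)*(1-x) = x^1 * ((1+x*x)*(1-x) - x*(1-x))"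
  by (simp add: algebra_simps)

lemma main: "Af k * ((1 - fps_X)^(2*((k+1) div 2)+1) * (1+fps_X^2)^(k div 2 + 1)) = fps_X^k * Qf (k+2)"
proof (induction k rule: nat_less_induct)
  case (1 k)
  show ?case
  proof (cases k)
    case 0
    have "Af 0 * ((1 - fps_X)^(2*((0+1) div 2)+1) * (1+fps_X^2)^(0 div 2 + 1))
       = (1 - fps_X) * ((1+fps_X^2) * Af 0)" by (simp add: ac_simps)
    also have "\<dots> = fps_X * (Bf 0 * (1 - fps_X)) + (1 - fps_X) * (1 - fps_X)"
      unfolding rec_0 by (simp add: algebra_simps)
    also have "\<dots> = fps_X^0 * Qf (0+2)"
    proof -
      have q: "Qf (0+2) = 1 + fps_X*fps_X - fps_X"
        using Qf_rec[of 0] by (simp add: Qf_0 power2_eq_square numeral_2_eq_2)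
      show ?thesis unfolding Bf_0 q by (simp add: algebra_simps)
    qed
    finally show ?thesis using 0 by simp
  next
    case (Suc m)
    show ?thesis
    proof (cases m)
      case 0
      have k: "k = 1" using Suc 0 by simp
      have b1: "Bf 1 * ((1 - fps_X) * (1 - fps_X)) = fps_X"
        using Bf_closed[of 1] by (simp add: power2_eq_square)
      have "Af 1 * ((1 - fps_X)^(2*((1+1) div 2)+1) * (1+fps_X^2)^(1 div 2 + 1))
         = (1 - fps_X) * (1 - fps_X) * (1 - fps_X) * ((1+fps_X^2) * Af 1)"
        by (simp add: ac_simps power3_eq_cube)
      also have "\<dots> = fps_X * (1 - fps_X) * (Bf 1 * ((1 - fps_X) * (1 - fps_X)))
           + fps_X * (1 - fps_X) * (1 - fps_X) * (1 - fps_X)"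
        unfolding rec_1 by (simp add: algebra_simps)
      also have "\<dots> = fps_X^1 * Qf (1+2)"
      proof -
        have q: "Qf (1+2) = (1 + fps_X*fps_X)*(1 - fps_X) - fps_X*(1 - fps_X)"
        proof -
          have n3: "(1::nat)+2 = Suc (Suc (Suc 0))" by simp
          show ?thesis unfolding n3 Qf_rec Qf_1 by (simp only: power2_eq_square power_Suc0_right)
        qed
        show ?thesis unfolding b1 q by (rule c1)
      qed
      finally show ?thesis using k by simp
    next
      case (Suc p)
      have k: "k = Suc (Suc p)" using \<open>k = Suc m\<close> Suc by simp
      have ih: "Af p * ((1 - fps_X)^(2*((p+1) div 2)+1) * (1+fps_X^2)^(p div 2 + 1)) = fps_X^p * Qf (p+2)"
        using 1 k by simp
      define a where "a = 2*((p+1) div 2)+1"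
      define b where "b = p div 2 + 1"
      define c :: "rat fps" where "c = (1 - fps_X)^a"
      define d :: "rat fps" where "d = (1 + fps_X^2)^b"
      define e :: "rat fps" where "e = (1 - fps_X)^(p mod 2)"
      define w :: "rat fps" where "w = (1 - fps_X)^(p+2)"
      define P :: "rat fps" where "P = fps_X^p"
      have ea: "2*((Suc (Suc p)+1) div 2)+1 = a + 2" unfolding a_def by simp
      have eb: "Suc (Suc p) div 2 + 1 = b + 1" unfolding b_def by simp
      have a2: "a + 2 = (p + 2) + 1 + p mod 2" unfolding a_def by presburger
      have ih': "Af p * c * d = P * Qf (p+2)" using ih unfolding c_def d_def a_def b_def P_def
        by (simp add: ac_simps)
      have ha: "c*(1-fps_X)*(1-fps_X) = w*(1-fps_X)*e"
      proof -
        have "c*(1-fps_X)*(1-fps_X) = (1 - fps_X)^(a+2)" unfolding c_def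
          by (simp add: power_add power2_eq_square ac_simps)
        also have "\<dots> = w*(1-fps_X)*e" unfolding a2 w_def e_def by (simp add: power_add)
        finally show ?thesis .
      qed
      have hb: "Bf (Suc (Suc p)) * (w*(1-fps_X)) = P*fps_X*fps_X"
        using Bf_closed[of "Suc (Suc p)"] unfolding w_def P_def
        by (simp add: ac_simps)
      have hq: "Qf (p+2) + Qf (p+2) = w + e*d"
      proof -
        have m: "(p+2) mod 2 = p mod 2" "(p+2) div 2 = b" unfolding b_def by auto
        show ?thesis using Qf_closed[of "p+2"] unfolding m w_def e_def d_def by (simp only: mult_2)
      qed
      have hq': "Qf (Suc (Suc p) + 2) = (1+fps_X*fps_X)*Qf (p+2) - fps_X*w"
        using Qf_rec[of "p+2"] unfolding w_def by (simp add: power2_eq_square)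
      have rec: "(1+fps_X*fps_X)*Af (Suc (Suc p)) = fps_X*fps_X*Af p + fps_X*Bf (Suc (Suc p))"
        using rec_step[of p] by (simp add: power2_eq_square)
      have r: "Af (Suc (Suc p))*(c*(1-fps_X)*(1-fps_X))*(d*(1+fps_X*fps_X)) = P*fps_X*fps_X*Qf (Suc (Suc p) + 2)"
        using rec ih' hb ha hq hq' by (rule alg)
      have "Af k * ((1 - fps_X)^(2*((k+1) div 2)+1) * (1+fps_X^2)^(k div 2 + 1))
          = Af (Suc (Suc p))*(c*(1-fps_X)*(1-fps_X))*(d*(1+fps_X*fps_X))"
      proof -
        have p1: "(1-fps_X)^(a+2) = c*(1-fps_X)*(1-fps_X)" unfolding c_def
          by (simp add: power_add power2_eq_square mult.assoc)
        have p2: "(1+fps_X^2)^(b+1) = d*(1+fps_X*fps_X)" unfolding d_def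
          by (simp add: power2_eq_square)
        show ?thesis unfolding k ea eb p1 p2 by (simp only: mult.assoc)
      qed
      also have "\<dots> = fps_X^k * Qf (k+2)" unfolding r k P_def by (simp add: ac_simps)
      finally show ?thesis .
    qed
  qed
qed

theorem proposition3p4:
  fixes k :: nat
  shows "Abs_fps (\<lambda>n. of_nat (e_even n (int n - int k)) :: rat) =
    fps_X ^ k / ((1 - fps_X) ^ (2 * ((k + 1) div 2) + 1) * (1 + fps_X ^ 2) ^ (k div 2 + 1))
    * fps_of_poly (pcompose (losanitsch_poly (k + 2)) [:0, -1:])"
proof -
  define D :: "rat fps" where "D = (1 - fps_X) ^ (2 * ((k + 1) div 2) + 1) * (1 + fps_X ^ 2) ^ (k div 2 + 1)"
  have D0: "D $ 0 \<noteq> 0" unfolding D_def by (simp add: fps_nth_power_0)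
  have m: "Af k * D = fps_X^k * Qf (k+2)" using main[of k] unfolding D_def .
  have "fps_X ^ k / D * Qf (k+2) = (fps_X^k * Qf (k+2)) * inverse D"
    by (simp add: fps_divide_unit[OF D0] ac_simps)
  also have "\<dots> = Af k * (D * inverse D)" unfolding m[symmetric] by (simp add: ac_simps)
  also have "\<dots> = Af k" using inverse_mult_eq_1'[OF D0] by simp
  finally show ?thesis unfolding D_def Af_def Qf_def by simp
qed


end
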